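(* Let $\gamma:K^*\to K$ be a non-degenerate simplicial dynamical system on a polyhedron $X=X(K)$ of positive dimension $d$. For $s^*\in K^*$ let $\bar g_{s^*}:\gamma(s^* )\to s^*$ be the affine isomorphism inverse to the restriction to $s^*$ of the p.l. map $g$ associated with $\gamma$. Then for all $x_1,x_2$ in the simplex $\gamma(s^* )$, $$d_K(\bar g_{s^*}(x_1),\bar g_{s^*}(x_2))\le\left(1-\frac{\theta(K^*,K)}{d}\right)d_K(x_1,x_2).$$
   Context: $K$ is a simplicial complex with vertex set $V(K)$; each $x\in X(K)$ has barycentric coordinates $b_v(x)\ge0$, $v\in V(K)$, summing to $1$, with $x=\sum_vb_v(x)v$ and $\{v:b_v(x)>0\}$ spanning a simplex of $K$. The metric $d_K(x,y)=\sum_{v\in V(K)}|b_v(x)-b_v(y)|$. A subdivision $K^*$ of $K$ is a triangulation of the same polyhedron in which every simplex of $K$ is a union of simplices of $K^*$; it is proper if no simplex of $K^*$ meets two disjoint simplices of $K$. A simplicial dynamical system is a simplicial map $\gamma:K^*\to K$ (vertex map sending vertex sets of simplices onto vertex sets of simplices) with $K^*$ a proper subdivision of $K$; it is non-degenerate if $\dim\gamma(s^* )=\dim s^*$ for all $s^*\in K^*$ (i.e. $\gamma$ is injective on the vertices of each simplex). The associated p.l. map is $g(x)=\sum_{v\in V(K^* )}b^*_v(x)\gamma(v)$ with $b^*$ the $K^*$ barycentric coordinates. $\theta(K^*,K)=\min\{b_v(v^* ):v^*\in V(K^* ),v\in V(K),b_v(v^* )>0\}$. The dimension $d$ of $X$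 is the maximal dimension of a simplex of $K$. *)

theory Defs
  imports Complex_Main
begin

text \<open>Abstract simplicial complex: finite set of nonempty finite vertex sets,
  closed under nonempty subsets. Points of the polyhedron are represented by
  their barycentric coordinate functions.\<close>

definition simplicial_complex :: "'v set set \<Rightarrow> bool" where
  "simplicial_complex K \<longleftrightarrow> finite K \<and> (\<forall>s\<in>K. finite s \<and> s \<noteq> {}) \<and>
     (\<forall>s\<in>K. \<forall>t. t \<subseteq> s \<and> t \<noteq> {} \<longrightarrow> t \<in> K)"

definition polyhedron :: "'v set set \<Rightarrow> ('v \<Rightarrow> real) set" where
  "polyhedron K = {b. (\<forall>v. 0 \<le> b v) \<and> (\<forall>v. v \<notin> \<Union>K \<longrightarrow> b v = 0) \<and>
      sum b (\<Union>K) = 1 \<and> {v. 0 < b v} \<in> K}"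

definition ksimplex :: "'v set \<Rightarrow> ('v \<Rightarrow> real) set" where
  "ksimplex s = {b. (\<forall>v. 0 \<le> b v) \<and> (\<forall>v. v \<notin> s \<longrightarrow> b v = 0) \<and> sum b s = 1}"

definition dK :: "'v set set \<Rightarrow> ('v \<Rightarrow> real) \<Rightarrow> ('v \<Rightarrow> real) \<Rightarrow> real" where
  "dK K x y = (\<Sum>v\<in>\<Union>K. \<bar>x v - y v\<bar>)"

definition cdim :: "'v set set \<Rightarrow> nat" where
  "cdim K = Max (card ` K) - 1"

text \<open>A subdivision K* is an abstract complex with vertex type 'w together with the
  placement p of its vertices as points of X(K) (p w v = b_v(w)).\<close>
definition comb :: "('w \<Rightarrow> 'v \<Rightarrow> real) \<Rightarrow> 'w set \<Rightarrow> ('w \<Rightarrow> real) \<Rightarrow> ('v \<Rightarrow> real)" where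
  "comb p t c = (\<lambda>v. \<Sum>w\<in>t. c w * p w v)"

definition ssimplex :: "('w \<Rightarrow> 'v \<Rightarrow> real) \<Rightarrow> 'w set \<Rightarrow> ('v \<Rightarrow> real) set" where
  "ssimplex p t = {comb p t c | c. (\<forall>w\<in>t. 0 \<le> c w) \<and> sum c t = 1}"

definition subdivision :: "'v set set \<Rightarrow> 'w set set \<Rightarrow> ('w \<Rightarrow> 'v \<Rightarrow> real) \<Rightarrow> bool" where
  "subdivision K Ks p \<longleftrightarrow>
     simplicial_complex K \<and> simplicial_complex Ks \<and>
     inj_on p (\<Union>Ks) \<and> (\<forall>w\<in>\<Union>Ks. p w \<in> polyhedron K) \<and>
     \<comment> \<open>simplices of K* are nondegenerate (affinely independent vertices)\<close>
     (\<forall>t\<in>Ks. \<forall>c. sum c t = 0 \<and> comb p t c = (\<lambda>v. 0) \<longrightarrow> (\<forall>w\<in>t. c w = 0)) \<and>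
     \<comment> \<open>each simplex of K* lies (linearly) in a simplex of K\<close>
     (\<forall>t\<in>Ks. \<exists>s\<in>K. ssimplex p t \<subseteq> ksimplex s) \<and>
     \<comment> \<open>simplices of K* meet in common faces\<close>
     (\<forall>t1\<in>Ks. \<forall>t2\<in>Ks. ssimplex p t1 \<inter> ssimplex p t2 = ssimplex p (t1 \<inter> t2)) \<and>
     \<comment> \<open>same polyhedron\<close>
     \<Union>(ssimplex p ` Ks) = polyhedron K \<and>
     \<comment> \<open>every simplex of K is a union of simplices of K*\<close>
     (\<forall>s\<in>K. \<exists>T\<subseteq>Ks. ksimplex s = \<Union>(ssimplex p ` T))"

definition proper_subdivision :: "'v set set \<Rightarrow> 'w set set \<Rightarrow> ('w \<Rightarrow> 'v \<Rightarrow> real) \<Rightarrow> bool" where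
  "proper_subdivision K Ks p \<longleftrightarrow> subdivision K Ks p \<and>
     (\<forall>t\<in>Ks. \<forall>s1\<in>K. \<forall>s2\<in>K. s1 \<inter> s2 = {} \<longrightarrow>
        \<not> (ssimplex p t \<inter> ksimplex s1 \<noteq> {} \<and> ssimplex p t \<inter> ksimplex s2 \<noteq> {}))"

definition simplicial_dynamical_system ::
  "'v set set \<Rightarrow> 'w set set \<Rightarrow> ('w \<Rightarrow> 'v \<Rightarrow> real) \<Rightarrow> ('w \<Rightarrow> 'v) \<Rightarrow> bool" where
  "simplicial_dynamical_system K Ks p \<gamma> \<longleftrightarrow>
     proper_subdivision K Ks p \<and> (\<forall>t\<in>Ks. \<gamma> ` t \<in> K)"

definition nondegenerate :: "'w set set \<Rightarrow> ('w \<Rightarrow> 'v) \<Rightarrow> bool" where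
  "nondegenerate Ks \<gamma> \<longleftrightarrow> (\<forall>t\<in>Ks. card (\<gamma> ` t) = card t)"

definition bstar :: "'w set set \<Rightarrow> ('w \<Rightarrow> 'v \<Rightarrow> real) \<Rightarrow> ('v \<Rightarrow> real) \<Rightarrow> 'w \<Rightarrow> real" where
  "bstar Ks p x = (THE c. (\<forall>w. 0 \<le> c w) \<and> (\<forall>w. w \<notin> \<Union>Ks \<longrightarrow> c w = 0) \<and>
       sum c (\<Union>Ks) = 1 \<and> {w. 0 < c w} \<in> Ks \<and> comb p (\<Union>Ks) c = x)"

definition vtx :: "'v \<Rightarrow> ('v \<Rightarrow> real)" where
  "vtx v = (\<lambda>u. if u = v then 1 else 0)"

definition plmap :: "'w set set \<Rightarrow> ('w \<Rightarrow> 'v \<Rightarrow> real) \<Rightarrow> ('w \<Rightarrow> 'v) \<Rightarrow> ('v \<Rightarrow> real) \<Rightarrow> ('v \<Rightarrow> real)" where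
  "plmap Ks p \<gamma> x = (\<lambda>v. \<Sum>w\<in>\<Union>Ks. bstar Ks p x w * vtx (\<gamma> w) v)"

definition theta :: "'v set set \<Rightarrow> 'w set set \<Rightarrow> ('w \<Rightarrow> 'v \<Rightarrow> real) \<Rightarrow> real" where
  "theta K Ks p = Min {p w v | w v. w \<in> \<Union>Ks \<and> v \<in> \<Union>K \<and> 0 < p w v}"

end

theory Submission
  imports Defs
begin


lemma core:
  fixes c :: "'w \<Rightarrow> real" and p :: "'w \<Rightarrow> 'v \<Rightarrow> real"
  assumes fS: "finite S" and fV: "finite V" and c0: "sum c S = 0"
    and D: "\<And>w w'. w \<in> S \<Longrightarrow> w' \<in> S \<Longrightarrow> (\<Sum>v\<in>V. \<bar>p w v - p w' v\<bar>) \<le> D"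
  shows "(\<Sum>v\<in>V. \<bar>\<Sum>w\<in>S. c w * p w v\<bar>) \<le> D / 2 * (\<Sum>w\<in>S. \<bar>c w\<bar>)"
proof -
  define P where "P w = max (c w) 0" for w
  define N where "N w = max (- c w) 0" for w
  have cPN: "c w = P w - N w" for w by (simp add: P_def N_def)
  have aPN: "\<bar>c w\<bar> = P w + N w" for w by (simp add: P_def N_def)
  have P0: "P w \<ge> 0" for w by (simp add: P_def)
  have N0: "N w \<ge> 0" for w by (simp add: N_def)
  define m where "m = sum P S"
  have mN: "sum N S = m" using c0 unfolding m_def cPN by (simp add: sum_subtractf)
  have abs2: "(\<Sum>w\<in>S. \<bar>c w\<bar>) = 2 * m" unfolding aPN by (simp add: sum.distrib mN m_def)
  show ?thesis
  proof (cases "m = 0")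
    case True
    have "\<forall>w\<in>S. P w = 0" using True fS P0 unfolding m_def by (simp add: sum_nonneg_eq_0_iff)
    moreover have "\<forall>w\<in>S. N w = 0" using True mN fS N0 by (simp add: sum_nonneg_eq_0_iff)
    ultimately have "\<forall>w\<in>S. c w = 0" using cPN by simp
    then show ?thesis by simp
  next
    case False
    have mpos: "m > 0" using False P0 unfolding m_def by (simp add: sum_nonneg order_le_neq_trans)
    have eq: "(\<Sum>w\<in>S. c w * p w v) = (\<Sum>w\<in>S. \<Sum>w'\<in>S. (P w * N w' / m) * (p w v - p w' v))" for v
    proof -
      have "(\<Sum>w\<in>S. \<Sum>w'\<in>S. (P w * N w' / m) * (p w v - p w' v))
          = (\<Sum>w\<in>S. \<Sum>w'\<in>S. (P w * p w v) * (N w' / m)) - (\<Sum>w\<in>S. \<Sum>w'\<in>S. (N w' * p w' v) * (P w / m))"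
        by (simp add: sum_subtractf[symmetric] algebra_simps diff_divide_distrib)
      also have "\<dots> = (\<Sum>w\<in>S. P w * p w v) - (\<Sum>w'\<in>S. N w' * p w' v)"
        using mpos by (simp add: sum_distrib_left[symmetric] sum_distrib_right[symmetric] sum_divide_distrib[symmetric] mN m_def sum.swap[of _ S S])
      also have "\<dots> = (\<Sum>w\<in>S. c w * p w v)" by (simp add: cPN sum_subtractf left_diff_distrib)
      finally show ?thesis by simp
    qed
    have "(\<Sum>v\<in>V. \<bar>\<Sum>w\<in>S. c w * p w v\<bar>) \<le> (\<Sum>v\<in>V. \<Sum>w\<in>S. \<Sum>w'\<in>S. (P w * N w' / m) * \<bar>p w v - p w' v\<bar>)"
    proof (rule sum_mono)
      fix v assume "v \<in> V"
      have "\<bar>\<Sum>w\<in>S. c w * p w v\<bar> \<le> (\<Sum>w\<in>S. \<bar>\<Sum>w'\<in>S. (P w * N w' / m) * (p w v - p w' v)\<bar>)"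
        unfolding eq by (rule sum_abs)
      also have "\<dots> \<le> (\<Sum>w\<in>S. \<Sum>w'\<in>S. \<bar>(P w * N w' / m) * (p w v - p w' v)\<bar>)"
        by (rule sum_mono) (rule sum_abs)
      also have "\<dots> = (\<Sum>w\<in>S. \<Sum>w'\<in>S. (P w * N w' / m) * \<bar>p w v - p w' v\<bar>)"
        using P0 N0 mpos by (simp add: abs_mult)
      finally show "\<bar>\<Sum>w\<in>S. c w * p w v\<bar> \<le> \<dots>" .
    qed
    also have "\<dots> = (\<Sum>w\<in>S. \<Sum>w'\<in>S. (P w * N w' / m) * (\<Sum>v\<in>V. \<bar>p w v - p w' v\<bar>))"
      by (simp add: sum_distrib_left sum.swap[of _ V])
    also have "\<dots> \<le> (\<Sum>w\<in>S. \<Sum>w'\<in>S. (P w * N w' / m) * D)"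
      apply (rule sum_mono, rule sum_mono)
      apply (rule mult_left_mono) using D P0 N0 mpos by auto
    also have "\<dots> = D * m"
      using mpos by (simp add: sum_distrib_right[symmetric] sum_divide_distrib[symmetric] sum_product[symmetric] mN m_def power2_eq_square)
    also have "\<dots> = D / 2 * (\<Sum>w\<in>S. \<bar>c w\<bar>)" by (simp add: abs2)
    finally show ?thesis .
  qed
qed


lemma comb_cong: "(\<And>w. w \<in> t \<Longrightarrow> c w = d w) \<Longrightarrow> comb p t c = comb p t d"
  unfolding comb_def by (auto intro!: sum.cong)

lemma comb_mono_neutral:
  assumes "finite T" "t \<subseteq> T" "\<And>w. w \<in> T - t \<Longrightarrow> c w = 0"
  shows "comb p T c = comb p t c"
  unfolding comb_def using assms by (auto intro!: sum.mono_neutral_right ext)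

lemma subdivisionD:
  assumes "subdivision K Ks p"
  shows "simplicial_complex K" "simplicial_complex Ks" "inj_on p (\<Union>Ks)"
    "\<forall>t\<in>Ks. \<forall>w\<in>t. p w \<in> polyhedron K"
    "\<And>t c. t\<in>Ks \<Longrightarrow> sum c t = 0 \<Longrightarrow> comb p t c = (\<lambda>v. 0) \<Longrightarrow> (\<forall>w\<in>t. c w = 0)"
    "\<And>t1 t2. t1\<in>Ks \<Longrightarrow> t2\<in>Ks \<Longrightarrow> ssimplex p t1 \<inter> ssimplex p t2 = ssimplex p (t1 \<inter> t2)"
  using assms unfolding subdivision_def by simp_all

lemma bstar_eq:
  assumes sub: "subdivision K Ks p" and s: "s \<in> Ks"
    and e0: "\<forall>w\<in>s. 0 \<le> e w" and e1: "sum e s = 1"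
  shows "bstar Ks p (comb p s e) = (\<lambda>w. if w \<in> s then e w else 0)"
proof -
  have scK: "simplicial_complex Ks" using subdivisionD(2)[OF sub] .
  have fin: "finite (\<Union>Ks)" using scK by (auto simp: simplicial_complex_def)
  have fint: "\<And>t. t \<in> Ks \<Longrightarrow> finite t" using scK by (auto simp: simplicial_complex_def)
  have clos: "\<And>t u. t \<in> Ks \<Longrightarrow> u \<subseteq> t \<Longrightarrow> u \<noteq> {} \<Longrightarrow> u \<in> Ks"
    using scK unfolding simplicial_complex_def by blast
  have indep: "\<And>t c. t \<in> Ks \<Longrightarrow> sum c t = 0 \<Longrightarrow> comb p t c = (\<lambda>v. 0) \<Longrightarrow> \<forall>w\<in>t. c w = 0"
    using subdivisionD(5)[OF sub] by blast
  have inter: "\<And>t1 t2. t1 \<in> Ks \<Longrightarrow> t2 \<in> Ks \<Longrightarrow> ssimplex p t1 \<inter> ssimplex p t2 = ssimplex p (t1 \<inter> t2)"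
    using subdivisionD(6)[OF sub] by blast
  have fs: "finite s" using fint s .
  have sU: "s \<subseteq> \<Union>Ks" using s by blast
  define c0 where "c0 = (\<lambda>w. if w \<in> s then e w else 0)"
  define y where "y = comb p s e"
  have comb_sub: "comb p t (\<lambda>w. a w - b w) = (\<lambda>v. comb p t a v - comb p t b v)" for t a b
    unfolding comb_def by (auto simp: sum_subtractf left_diff_distrib)
  have P: "(\<forall>w. 0 \<le> c w) \<and> (\<forall>w. w \<notin> \<Union>Ks \<longrightarrow> c w = 0) \<and>
       sum c (\<Union>Ks) = 1 \<and> {w. 0 < c w} \<in> Ks \<and> comb p (\<Union>Ks) c = y \<longleftrightarrow> c = c0" for c
  proof
    assume H: "(\<forall>w. 0 \<le> c w) \<and> (\<forall>w. w \<notin> \<Union>Ks \<longrightarrow> c w = 0) \<and>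
       sum c (\<Union>Ks) = 1 \<and> {w. 0 < c w} \<in> Ks \<and> comb p (\<Union>Ks) c = y"
    define t where "t = {w. 0 < c w}"
    have t: "t \<in> Ks" using H t_def by simp
    have ft: "finite t" using fint t .
    have tU: "t \<subseteq> \<Union>Ks" using t by blast
    have zero: "c w = 0" if "w \<notin> t" for w using H that t_def by (metis less_eq_real_def mem_Collect_eq)
    have ct: "comb p t c = y" using H comb_mono_neutral[OF fin tU, of c p] zero by auto
    have st: "sum c t = 1" using H sum.mono_neutral_right[OF fin tU, of c] zero by auto
    have "y \<in> ssimplex p t" unfolding ssimplex_def using ct st H by blast
    moreover have "y \<in> ssimplex p s" unfolding ssimplex_def y_def using e0 e1 by blast
    ultimately have "y \<in> ssimplex p (t \<inter> s)" using inter[OF t s] by blast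
    then obtain f where f: "y = comb p (t \<inter> s) f" "\<forall>w\<in>t\<inter>s. 0 \<le> f w" "sum f (t \<inter> s) = 1"
      unfolding ssimplex_def by blast
    define f' where "f' = (\<lambda>w. if w \<in> s then f w else 0)"
    have "comb p t f' = comb p (t \<inter> s) f'"
      by (rule comb_mono_neutral) (use ft in \<open>auto simp: f'_def\<close>)
    also have "\<dots> = comb p (t \<inter> s) f" by (rule comb_cong) (simp add: f'_def)
    finally have cf': "comb p t f' = y" using f by simp
    have "sum f' t = sum f' (t \<inter> s)"
      by (rule sum.mono_neutral_right) (use ft in \<open>auto simp: f'_def\<close>)
    also have "\<dots> = 1" using f(3) by (simp add: f'_def)
    finally have sf': "sum f' t = 1" .
    have "\<forall>w\<in>t. c w - f' w = 0"
      apply (rule indep[OF t])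
      using st sf' apply (simp add: sum_subtractf)
      using ct cf' comb_sub[of t c f'] by simp
    hence ts: "t \<subseteq> s"
    proof (intro subsetI)
      fix w assume a: "\<forall>w\<in>t. c w - f' w = 0" and w: "w \<in> t"
      hence "c w = f' w" by simp
      moreover have "0 < c w" using w t_def by simp
      ultimately show "w \<in> s" unfolding f'_def by (auto split: if_splits)
    qed
    have cs: "comb p s c = y" using comb_mono_neutral[OF fs ts, of c p] zero ct by auto
    have ss: "sum c s = 1" using sum.mono_neutral_right[OF fs ts, of c] zero st by auto
    have "\<forall>w\<in>s. c w - e w = 0"
      apply (rule indep[OF s])
      using ss e1 apply (simp add: sum_subtractf)
      using cs comb_sub[of s c e] y_def by simp
    thus "c = c0" unfolding c0_def using zero ts by (auto intro!: ext) blast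
  next
    assume "c = c0"
    moreover have "(\<forall>w. 0 \<le> c0 w)" using e0 by (simp add: c0_def)
    moreover have "(\<forall>w. w \<notin> \<Union>Ks \<longrightarrow> c0 w = 0)" using sU by (auto simp: c0_def)
    moreover have "sum c0 (\<Union>Ks) = 1"
      using sum.mono_neutral_right[OF fin sU, of c0] e1 by (simp add: c0_def)
    moreover have "{w. 0 < c0 w} \<in> Ks"
    proof (rule clos[OF s])
      show "{w. 0 < c0 w} \<subseteq> s" by (auto simp: c0_def split: if_splits)
      show "{w. 0 < c0 w} \<noteq> {}"
      proof
        assume "{w. 0 < c0 w} = {}"
        hence "\<forall>w\<in>s. e w = 0" using e0 unfolding c0_def
          by (metis (mono_tags, lifting) empty_Collect_eq order_less_le)
        thus False using e1 by simp
      qed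
    qed
    moreover have "comb p (\<Union>Ks) c0 = y"
      using comb_mono_neutral[OF fin sU, of c0 p] comb_cong[of s c0 e p] by (simp add: c0_def y_def)
    ultimately show "(\<forall>w. 0 \<le> c w) \<and> (\<forall>w. w \<notin> \<Union>Ks \<longrightarrow> c w = 0) \<and>
       sum c (\<Union>Ks) = 1 \<and> {w. 0 < c w} \<in> Ks \<and> comb p (\<Union>Ks) c = y" by simp
  qed
  show ?thesis unfolding bstar_def y_def[symmetric] P c0_def by simp
qed


lemma plmap_comb:
  assumes sub: "subdivision K Ks p" and s: "s \<in> Ks"
    and e0: "\<forall>w\<in>s. 0 \<le> e w" and e1: "sum e s = 1"
  shows "plmap Ks p \<gamma> (comb p s e) = (\<lambda>v. \<Sum>w\<in>s. e w * vtx (\<gamma> w) v)"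
proof -
  have fin: "finite (\<Union>Ks)" using subdivisionD(2)[OF sub] by (auto simp: simplicial_complex_def)
  have sU: "s \<subseteq> \<Union>Ks" using s by blast
  show ?thesis
    unfolding plmap_def bstar_eq[OF sub s e0 e1]
    by (rule ext, rule sum.mono_neutral_cong_right[OF fin sU]) auto
qed

lemma sum_vtx:
  assumes "finite s" "inj_on \<gamma> s" "w0 \<in> s"
  shows "(\<Sum>w\<in>s. e w * vtx (\<gamma> w) (\<gamma> w0)) = e w0"
proof -
  have "(\<Sum>w\<in>s. e w * vtx (\<gamma> w) (\<gamma> w0)) = (\<Sum>w\<in>s. if w = w0 then e w else 0)"
    using assms by (intro sum.cong) (auto simp: vtx_def inj_on_def)
  also have "\<dots> = e w0" using assms by simp
  finally show ?thesis .
qed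

theorem proposition4p8:
  fixes K :: "'v set set" and Ks :: "'w set set" and p :: "'w \<Rightarrow> 'v \<Rightarrow> real"
    and \<gamma> :: "'w \<Rightarrow> 'v" and s :: "'w set" and x1 x2 :: "'v \<Rightarrow> real"
  assumes "simplicial_dynamical_system K Ks p \<gamma>"
    and "nondegenerate Ks \<gamma>"
    and "cdim K > 0"
    and "s \<in> Ks"
    and "x1 \<in> ksimplex (\<gamma> ` s)" and "x2 \<in> ksimplex (\<gamma> ` s)"
  shows "dK K (inv_into (ssimplex p s) (plmap Ks p \<gamma>) x1)
              (inv_into (ssimplex p s) (plmap Ks p \<gamma>) x2)
         \<le> (1 - theta K Ks p / real (cdim K)) * dK K x1 x2"
proof -
  note sds = assms(1)[unfolded simplicial_dynamical_system_def]
  have psub: "proper_subdivision K Ks p" using sds by simp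
  have sub: "subdivision K Ks p" using psub by (simp add: proper_subdivision_def)
  have prp: "\<And>t s1 s2. t\<in>Ks \<Longrightarrow> s1\<in>K \<Longrightarrow> s2\<in>K \<Longrightarrow> s1 \<inter> s2 = {} \<Longrightarrow>
        \<not> (ssimplex p t \<inter> ksimplex s1 \<noteq> {} \<and> ssimplex p t \<inter> ksimplex s2 \<noteq> {})"
    using psub unfolding proper_subdivision_def by blast
  have s: "s \<in> Ks" by fact
  have gsK: "\<gamma> ` s \<in> K" using sds s by blast
  have scK: "simplicial_complex K" using subdivisionD(1)[OF sub] .
  have scKs: "simplicial_complex Ks" using subdivisionD(2)[OF sub] .
  define V where "V = \<Union>K"
  have fV: "finite V" using scK by (auto simp: simplicial_complex_def V_def)
  have fs: "finite s" using scKs s by (auto simp: simplicial_complex_def)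
  have sne: "s \<noteq> {}" using scKs s by (auto simp: simplicial_complex_def)
  have finKs: "finite (\<Union>Ks)" using scKs by (auto simp: simplicial_complex_def)
  have inj: "inj_on \<gamma> s" using assms(2) s fs by (simp add: nondegenerate_def inj_on_iff_eq_card)
  have gsV: "\<gamma> ` s \<subseteq> V" using gsK V_def by blast
  have ppoly: "\<And>w. w \<in> s \<Longrightarrow> p w \<in> polyhedron K" using subdivisionD(4)[OF sub] s by blast
  define Th where "Th = {p w v | w v. w \<in> \<Union>Ks \<and> v \<in> \<Union>K \<and> 0 < p w v}"
  have fTh: "finite Th"
  proof -
    have "Th \<subseteq> (\<lambda>(w,v). p w v) ` (\<Union>Ks \<times> \<Union>K)" unfolding Th_def by auto
    moreover have "finite (\<Union>Ks \<times> \<Union>K)" using finKs fV V_def by simp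
    ultimately show ?thesis using finite_subset by blast
  qed
  have thle: "theta K Ks p \<le> p w v" if "w \<in> s" "v \<in> V" "0 < p w v" for w v
    unfolding theta_def Th_def[symmetric] using that s V_def fTh by (intro Min_le) (auto simp: Th_def)
  obtain w1 where w1: "w1 \<in> s" using sne by blast
  have "sum (p w1) V = 1" using ppoly[OF w1] by (simp add: polyhedron_def V_def)
  then obtain v1 where v1: "v1 \<in> V" "p w1 v1 \<noteq> 0" by (metis sum.neutral zero_neq_one)
  hence "0 < p w1 v1" using ppoly[OF w1] by (simp add: polyhedron_def order_less_le)
  hence ThNe: "Th \<noteq> {}" using w1 v1 s V_def unfolding Th_def by blast
  have th0: "0 \<le> theta K Ks p"
  proof -
    have "theta K Ks p \<in> Th" unfolding theta_def Th_def[symmetric] using fTh ThNe by (rule Min_in)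
    thus ?thesis unfolding Th_def by auto
  qed
  have Dbound: "(\<Sum>v\<in>V. \<bar>p w v - p w' v\<bar>) \<le> 2 - 2 * theta K Ks p" if w: "w \<in> s" and w': "w' \<in> s" for w w'
  proof -
    define S1 where "S1 = {v. 0 < p w v}"
    define S2 where "S2 = {v. 0 < p w' v}"
    have P1: "p w \<in> polyhedron K" using ppoly w .
    have P2: "p w' \<in> polyhedron K" using ppoly w' .
    have S1K: "S1 \<in> K" using P1 by (simp add: polyhedron_def S1_def)
    have S2K: "S2 \<in> K" using P2 by (simp add: polyhedron_def S2_def)
    have nn1: "\<And>v. 0 \<le> p w v" using P1 by (simp add: polyhedron_def)
    have nn2: "\<And>v. 0 \<le> p w' v" using P2 by (simp add: polyhedron_def)
    have out1: "\<And>v. v \<notin> V \<Longrightarrow> p w v = 0" using P1 by (simp add: polyhedron_def V_def)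
    have out2: "\<And>v. v \<notin> V \<Longrightarrow> p w' v = 0" using P2 by (simp add: polyhedron_def V_def)
    have sum1: "sum (p w) V = 1" using P1 by (simp add: polyhedron_def V_def)
    have sum2: "sum (p w') V = 1" using P2 by (simp add: polyhedron_def V_def)
    have S1V: "S1 \<subseteq> V" using out1 S1_def by force
    have S2V: "S2 \<subseteq> V" using out2 S2_def by force
    have inss: "p u \<in> ssimplex p s" if "u \<in> s" for u
    proof -
      have "comb p s (\<lambda>x. if x = u then 1 else 0) = p u"
      proof
        fix v
        have "(\<Sum>x\<in>s. (if x = u then 1 else 0) * p x v) = (\<Sum>x\<in>s. if x = u then p x v else 0)"
          by (rule sum.cong) auto
        thus "comb p s (\<lambda>x. if x = u then 1 else 0) v = p u v" unfolding comb_def using fs that by simp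
      qed
      moreover have "sum (\<lambda>x. if x = u then 1 else (0::real)) s = 1" using fs that by simp
      ultimately show ?thesis unfolding ssimplex_def
        by (smt (verit, best) mem_Collect_eq)
    qed
    have k1: "p w \<in> ksimplex S1"
    proof -
      have "sum (p w) S1 = sum (p w) V"
        by (rule sum.mono_neutral_left[OF fV S1V]) (use nn1 in \<open>auto simp: S1_def order_less_le\<close>)
      thus ?thesis unfolding ksimplex_def using nn1 sum1 S1_def by (auto simp: order_less_le)
    qed
    have k2: "p w' \<in> ksimplex S2"
    proof -
      have "sum (p w') S2 = sum (p w') V"
        by (rule sum.mono_neutral_left[OF fV S2V]) (use nn2 in \<open>auto simp: S2_def order_less_le\<close>)
      thus ?thesis unfolding ksimplex_def using nn2 sum2 S2_def by (auto simp: order_less_le)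
    qed
    have "S1 \<inter> S2 \<noteq> {}"
    proof
      assume "S1 \<inter> S2 = {}"
      from prp[OF s S1K S2K this] show False using inss[OF w] inss[OF w'] k1 k2 by blast
    qed
    then obtain v0 where v0: "v0 \<in> S1" "v0 \<in> S2" by blast
    have v0V: "v0 \<in> V" using v0 S1V by blast
    have a: "theta K Ks p \<le> min (p w v0) (p w' v0)"
      using thle[OF w v0V] thle[OF w' v0V] v0 S1_def S2_def by simp
    have "(\<Sum>v\<in>V. \<bar>p w v - p w' v\<bar>) = (\<Sum>v\<in>V. p w v + p w' v - 2 * min (p w v) (p w' v))"
      by (intro sum.cong) (auto simp: min_def)
    also have "\<dots> = 2 - 2 * (\<Sum>v\<in>V. min (p w v) (p w' v))"
      using sum1 sum2 by (simp add: sum_subtractf sum.distrib sum_distrib_left)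
    also have "(\<Sum>v\<in>V. min (p w v) (p w' v)) \<ge> min (p w v0) (p w' v0)"
      using nn1 nn2 fV v0V by (intro member_le_sum) auto
    hence "2 - 2 * (\<Sum>v\<in>V. min (p w v) (p w' v)) \<le> 2 - 2 * theta K Ks p" using a by linarith
    finally show ?thesis .
  qed
  define a1 where "a1 w = x1 (\<gamma> w)" for w
  define a2 where "a2 w = x2 (\<gamma> w)" for w
  have xk: "x \<in> ksimplex (\<gamma> ` s) \<Longrightarrow> (\<forall>w\<in>s. 0 \<le> x (\<gamma> w)) \<and> sum (\<lambda>w. x (\<gamma> w)) s = 1" for x
    unfolding ksimplex_def using sum.reindex[OF inj, of x] by auto
  have plz: "plmap Ks p \<gamma> z (\<gamma> w) = e w" if "z = comb p s e" "\<forall>w\<in>s. 0 \<le> e w" "sum e s = 1" "w \<in> s" for z e w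
    using plmap_comb[OF sub s that(2,3), of \<gamma>] sum_vtx[OF fs inj that(4)] that(1) by simp
  have injpl: "inj_on (plmap Ks p \<gamma>) (ssimplex p s)"
  proof (rule inj_onI)
    fix z z' assume "z \<in> ssimplex p s" "z' \<in> ssimplex p s" and eq: "plmap Ks p \<gamma> z = plmap Ks p \<gamma> z'"
    then obtain e e' where e: "z = comb p s e" "\<forall>w\<in>s. 0 \<le> e w" "sum e s = 1"
      and e': "z' = comb p s e'" "\<forall>w\<in>s. 0 \<le> e' w" "sum e' s = 1" unfolding ssimplex_def by blast
    have "\<forall>w\<in>s. e w = e' w" using plz[OF e] plz[OF e'] eq by metis
    thus "z = z'" using e(1) e'(1) comb_cong by metis
  qed
  have pre: "inv_into (ssimplex p s) (plmap Ks p \<gamma>) x = comb p s (\<lambda>w. x (\<gamma> w))"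
    if x: "x \<in> ksimplex (\<gamma> ` s)" for x
  proof -
    have e: "\<forall>w\<in>s. 0 \<le> x (\<gamma> w)" "sum (\<lambda>w. x (\<gamma> w)) s = 1" using xk[OF x] by auto
    have mem: "comb p s (\<lambda>w. x (\<gamma> w)) \<in> ssimplex p s" unfolding ssimplex_def using e by blast
    have "plmap Ks p \<gamma> (comb p s (\<lambda>w. x (\<gamma> w))) = x"
    proof
      fix v
      show "plmap Ks p \<gamma> (comb p s (\<lambda>w. x (\<gamma> w))) v = x v"
      proof (cases "v \<in> \<gamma> ` s")
        case True
        then obtain w0 where "w0 \<in> s" "v = \<gamma> w0" by blast
        thus ?thesis using plz[OF refl e] by simp
      next
        case False
        hence "x v = 0" using x by (simp add: ksimplex_def)
        moreover have "(\<Sum>w\<in>s. x (\<gamma> w) * vtx (\<gamma> w) v) = 0"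
          using False by (intro sum.neutral) (auto simp: vtx_def)
        ultimately show ?thesis using plmap_comb[OF sub s e, of \<gamma>] by simp
      qed
    qed
    thus ?thesis using inv_into_f_f[OF injpl mem] by simp
  qed
  have lhs: "dK K (inv_into (ssimplex p s) (plmap Ks p \<gamma>) x1) (inv_into (ssimplex p s) (plmap Ks p \<gamma>) x2)
      = (\<Sum>v\<in>V. \<bar>\<Sum>w\<in>s. (a1 w - a2 w) * p w v\<bar>)"
    unfolding pre[OF assms(5)] pre[OF assms(6)] dK_def V_def[symmetric] comb_def a1_def a2_def
    by (simp add: sum_subtractf left_diff_distrib)
  have rhs: "dK K x1 x2 = (\<Sum>w\<in>s. \<bar>a1 w - a2 w\<bar>)"
  proof -
    have "dK K x1 x2 = (\<Sum>v\<in>\<gamma> ` s. \<bar>x1 v - x2 v\<bar>)"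
      unfolding dK_def V_def[symmetric]
      by (rule sum.mono_neutral_right[OF fV gsV]) (use assms(5,6) in \<open>auto simp: ksimplex_def\<close>)
    also have "\<dots> = (\<Sum>w\<in>s. \<bar>a1 w - a2 w\<bar>)" unfolding a1_def a2_def using sum.reindex[OF inj] by simp
    finally show ?thesis .
  qed
  have c0: "sum (\<lambda>w. a1 w - a2 w) s = 0"
    using xk[OF assms(5)] xk[OF assms(6)] by (simp add: sum_subtractf a1_def a2_def)
  have "(\<Sum>v\<in>V. \<bar>\<Sum>w\<in>s. (a1 w - a2 w) * p w v\<bar>) \<le> (2 - 2 * theta K Ks p) / 2 * (\<Sum>w\<in>s. \<bar>a1 w - a2 w\<bar>)"
    by (rule core[OF fs fV c0 Dbound])
  also have "\<dots> \<le> (1 - theta K Ks p / real (cdim K)) * (\<Sum>w\<in>s. \<bar>a1 w - a2 w\<bar>)"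
  proof (rule mult_right_mono)
    have "real (cdim K) \<ge> 1" using assms(3) by simp
    hence "theta K Ks p / real (cdim K) \<le> theta K Ks p" using th0
      divide_left_mono[of 1 "real (cdim K)" "theta K Ks p"] by simp
    thus "(2 - 2 * theta K Ks p) / 2 \<le> 1 - theta K Ks p / real (cdim K)" 
      using \<open>theta K Ks p / real (cdim K) \<le> theta K Ks p\<close> by (simp add: diff_divide_distrib)
  qed (simp add: sum_nonneg)
  finally show ?thesis using lhs rhs by simp
qed

end
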